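(* Consider problem (P) and suppose Assumptions A and B hold. Let $\{(x^t,L_g^t)\}$ be generated by SCP$_{ls}$ and let $\Omega$ be the set of accumulation points of $\{(x^{t+1},x^t,L_g^t)\}$. Then $\Omega\neq\emptyset$ and $\bar F\equiv\bar F^*$ on $\Omega$, where $\bar F^*:=\lim_{t\to\infty}\bar F(x^{t+1},x^t,L_g^t)$ (this limit exists and is finite).
   Context: Problem (P): $\min_{x\in\mathbb R^n}F(x):=f(x)+P_1(x)-P_2(x)+\delta_{\{g\le 0\}}(x)$, where $f:\mathbb R^n\to\mathbb R$ is continuously differentiable, $P_1,P_2:\mathbb R^n\to\mathbb R$ are convex and continuous, $g=(g_1,\dots,g_m):\mathbb R^n\to\mathbb R^m$ is continuous with $\{x:g(x)\le0\}\neq\emptyset$ (componentwise inequalities), $\delta_C$ the indicator function of $C$. Assumption A: (i) $\nabla f$ is Lipschitz with modulus $L_f$; (ii) each $g_i$ is differentiable with $\nabla g_i$ Lipschitz with modulus $L_{g_i}$; (iii) $F$ is level-bounded. Assumption B (MFCQ): each $g_i$ is continuously differentiable and for every $x$ with $g(x)\le0$ there is $d$ with $\langle\nabla g_i(x),d\rangle<0$ for all $i\in I(x):=\{j:g_j(x)=0\}$. $\bar G(x,y,w)\in\mathbb R^m$ ($x,y\in\mathbb R^n,w\in\mathbb R^m$) has components $\bar G_i(x,y,w)=g_i(y)+\langle\nabla g_i(y),x-y\rangle+\frac{w_i}{2}\|x-y\|^2$, and $\bar F(x,y,w):=f(x)+P_1(x)-P_2(x)+\delta_{\{\bar G\le0\}}(x,y,w)$.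 Algorithm SCP$_{ls}$: fix $c>0$, $0<\underline L<\bar L$, $\tau>1$ and $x^0$ with $g(x^0)\le0$. For $t=0,1,2,\dots$: (1) pick any $\xi^t\in\partial P_2(x^t)$; (2) choose $L_f^{t,0}\in[\underline L,\bar L]$, $L_g^{t,0}\in[\underline L,\bar L]^m$ arbitrarily, set $\tilde L_f=L_f^{t,0}$, $\tilde L_g=L_g^{t,0}$; (3) compute $\tilde x$ solving: minimize $\langle\nabla f(x^t)-\xi^t,x-x^t\rangle+\frac{\tilde L_f}{2}\|x-x^t\|^2+P_1(x)$ subject to $\bar G(x,x^t,\tilde L_g)\le0$. If $g(\tilde x)\le0$ and $F(\tilde x)\le F(x^t)-\frac c2\|\tilde x-x^t\|^2$, set $x^{t+1}=\tilde x$, $L_f^t=\tilde L_f$, $L_g^t=\tilde L_g$ and go to iteration $t+1$; otherwise, if $g(\tilde x)\not\le0$ replace $\tilde L_g$ by $\tau\tilde L_g$, while if $g(\tilde x)\le0$ but the decrease inequality fails replace $\tilde L_f$ by $\tau\tilde L_f$, and repeat step (3). *)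

theory Defs
  imports "HOL-Analysis.Analysis"
begin

text \<open>Constraint functions are indexed by a finite type 'm (so m = CARD('m));
  the variable x ranges over a Euclidean space 'a (playing the role of R^n).\<close>

definition feasible :: "('m::finite \<Rightarrow> 'a \<Rightarrow> real) \<Rightarrow> 'a \<Rightarrow> bool" where
  "feasible g x \<longleftrightarrow> (\<forall>i. g i x \<le> 0)"

definition Fobj :: "('a \<Rightarrow> real) \<Rightarrow> ('a \<Rightarrow> real) \<Rightarrow> ('a \<Rightarrow> real) \<Rightarrow>
    ('m::finite \<Rightarrow> 'a \<Rightarrow> real) \<Rightarrow> 'a \<Rightarrow> ereal" where
  "Fobj f P1 P2 g x = (if feasible g x then ereal (f x + P1 x - P2 x) else \<infinity>)"

definition level_bounded :: "('a::real_normed_vector \<Rightarrow> ereal) \<Rightarrow> bool" where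
  "level_bounded F \<longleftrightarrow> (\<forall>\<alpha>::real. bounded {x. F x \<le> ereal \<alpha>})"

definition convex_subdiff :: "('a::real_inner \<Rightarrow> real) \<Rightarrow> 'a \<Rightarrow> 'a set" where
  "convex_subdiff P x = {\<xi>. \<forall>y. P y \<ge> P x + inner \<xi> (y - x)}"

definition Gbar :: "('m::finite \<Rightarrow> 'a::real_inner \<Rightarrow> real) \<Rightarrow> ('m \<Rightarrow> 'a \<Rightarrow> 'a) \<Rightarrow>
    'a \<Rightarrow> 'a \<Rightarrow> real^'m \<Rightarrow> 'm \<Rightarrow> real" where
  "Gbar g gradg x y w i = g i y + inner (gradg i y) (x - y) + w $ i / 2 * (norm (x - y))\<^sup>2"

definition Fbar :: "('a::real_inner \<Rightarrow> real) \<Rightarrow> ('a \<Rightarrow> real) \<Rightarrow> ('a \<Rightarrow> real) \<Rightarrow>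
    ('m::finite \<Rightarrow> 'a \<Rightarrow> real) \<Rightarrow> ('m \<Rightarrow> 'a \<Rightarrow> 'a) \<Rightarrow> 'a \<Rightarrow> 'a \<Rightarrow> real^'m \<Rightarrow> ereal" where
  "Fbar f P1 P2 g gradg x y w =
     (if (\<forall>i. Gbar g gradg x y w i \<le> 0) then ereal (f x + P1 x - P2 x) else \<infinity>)"

definition scp_sub :: "('a::real_inner \<Rightarrow> 'a) \<Rightarrow> ('a \<Rightarrow> real) \<Rightarrow>
    ('m::finite \<Rightarrow> 'a \<Rightarrow> real) \<Rightarrow> ('m \<Rightarrow> 'a \<Rightarrow> 'a) \<Rightarrow>
    'a \<Rightarrow> 'a \<Rightarrow> real \<Rightarrow> real^'m \<Rightarrow> 'a \<Rightarrow> bool" where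
  "scp_sub gradf P1 g gradg xt \<xi> lf lg z \<longleftrightarrow>
     is_arg_min (\<lambda>x. inner (gradf xt - \<xi>) (x - xt) + lf / 2 * (norm (x - xt))\<^sup>2 + P1 x)
                (\<lambda>x. \<forall>i. Gbar g gradg x xt lg i \<le> 0) z"

definition scp_accept :: "('a::real_normed_vector \<Rightarrow> real) \<Rightarrow> ('a \<Rightarrow> real) \<Rightarrow> ('a \<Rightarrow> real) \<Rightarrow>
    ('m::finite \<Rightarrow> 'a \<Rightarrow> real) \<Rightarrow> real \<Rightarrow> 'a \<Rightarrow> 'a \<Rightarrow> bool" where
  "scp_accept f P1 P2 g c xt z \<longleftrightarrow>
     feasible g z \<and> Fobj f P1 P2 g z \<le> Fobj f P1 P2 g xt - ereal (c / 2 * (norm (z - xt))\<^sup>2)"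

text \<open>One outer iteration t of SCP_ls: from x^t produce x^{t+1} with accepted
  parameters L_f^t, L_g^t, through a finite sequence of trial parameters
  (lfs k, lgs k) and trial points zs k, k = 0..K.\<close>
definition scp_ls_iter :: "('a::real_inner \<Rightarrow> real) \<Rightarrow> ('a \<Rightarrow> 'a) \<Rightarrow> ('a \<Rightarrow> real) \<Rightarrow> ('a \<Rightarrow> real) \<Rightarrow>
    ('m::finite \<Rightarrow> 'a \<Rightarrow> real) \<Rightarrow> ('m \<Rightarrow> 'a \<Rightarrow> 'a) \<Rightarrow>
    real \<Rightarrow> real \<Rightarrow> real \<Rightarrow> real \<Rightarrow> 'a \<Rightarrow> 'a \<Rightarrow> real \<Rightarrow> real^'m \<Rightarrow> bool" where
  "scp_ls_iter f gradf P1 P2 g gradg c Llo Lup \<tau> xt xnext Lft Lgt \<longleftrightarrow>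
     (\<exists>\<xi> (lfs :: nat \<Rightarrow> real) (lgs :: nat \<Rightarrow> real^'m) (zs :: nat \<Rightarrow> 'a) (K :: nat).
        \<xi> \<in> convex_subdiff P2 xt \<and>
        Llo \<le> lfs 0 \<and> lfs 0 \<le> Lup \<and>
        (\<forall>i. Llo \<le> lgs 0 $ i \<and> lgs 0 $ i \<le> Lup) \<and>
        (\<forall>k\<le>K. scp_sub gradf P1 g gradg xt \<xi> (lfs k) (lgs k) (zs k)) \<and>
        (\<forall>k<K. \<not> scp_accept f P1 P2 g c xt (zs k) \<and>
               (if feasible g (zs k)
                then lfs (Suc k) = \<tau> * lfs k \<and> lgs (Suc k) = lgs k
                else lfs (Suc k) = lfs k \<and> lgs (Suc k) = \<tau> *\<^sub>R lgs k)) \<and>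
        scp_accept f P1 P2 g c xt (zs K) \<and>
        xnext = zs K \<and> Lft = lfs K \<and> Lgt = lgs K)"

definition scp_ls_seq :: "('a::real_inner \<Rightarrow> real) \<Rightarrow> ('a \<Rightarrow> 'a) \<Rightarrow> ('a \<Rightarrow> real) \<Rightarrow> ('a \<Rightarrow> real) \<Rightarrow>
    ('m::finite \<Rightarrow> 'a \<Rightarrow> real) \<Rightarrow> ('m \<Rightarrow> 'a \<Rightarrow> 'a) \<Rightarrow>
    real \<Rightarrow> real \<Rightarrow> real \<Rightarrow> real \<Rightarrow> (nat \<Rightarrow> 'a) \<Rightarrow> (nat \<Rightarrow> real) \<Rightarrow> (nat \<Rightarrow> real^'m) \<Rightarrow> bool" where
  "scp_ls_seq f gradf P1 P2 g gradg c Llo Lup \<tau> x Lf Lg \<longleftrightarrow>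
     feasible g (x 0) \<and>
     (\<forall>t. scp_ls_iter f gradf P1 P2 g gradg c Llo Lup \<tau> (x t) (x (Suc t)) (Lf t) (Lg t))"

definition accum_points :: "(nat \<Rightarrow> 'b::topological_space) \<Rightarrow> 'b set" where
  "accum_points s = {z. \<exists>r. strict_mono r \<and> (s \<circ> r) \<longlonglongrightarrow> z}"

end

theory Submission
  imports Defs
begin

lemma descent:
  fixes \<phi> :: "'a::real_inner \<Rightarrow> real"
  assumes gd: "\<And>z. (\<phi> has_derivative (\<lambda>h. inner (G z) h)) (at z)"
    and lip: "\<And>y z. norm (G y - G z) \<le> L * norm (y - z)"
  shows "\<phi> z \<le> \<phi> y + inner (G y) (z - y) + L/2 * (norm (z-y))\<^sup>2"
proof -
  define d where "d = z - y"
  define \<psi> where "\<psi> = (\<lambda>s::real. \<phi> (y + s *\<^sub>R d) - s * inner (G y) d - L/2 * s\<^sup>2 * (norm d)\<^sup>2)"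
  define \<psi>' where "\<psi>' = (\<lambda>s::real. inner (G (y + s *\<^sub>R d)) d - inner (G y) d - L * s * (norm d)\<^sup>2)"
  have der: "(\<psi> has_real_derivative \<psi>' s) (at s)" for s
  proof -
    have h1: "((\<lambda>s. y + s *\<^sub>R d) has_derivative (\<lambda>h. h *\<^sub>R d)) (at s)"
      by (auto intro!: derivative_eq_intros)
    have h2: "((\<lambda>s. \<phi> (y + s *\<^sub>R d)) has_derivative (\<lambda>h. inner (G (y + s *\<^sub>R d)) (h *\<^sub>R d))) (at s)"
      using has_derivative_compose[OF h1 gd] by simp
    have h3: "((\<lambda>s. \<phi> (y + s *\<^sub>R d)) has_real_derivative inner (G (y + s *\<^sub>R d)) d) (at s)"
      using h2 unfolding has_field_derivative_def by (simp add: mult.commute[of _ "inner _ d"])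
    show ?thesis unfolding \<psi>_def \<psi>'_def
      by (rule derivative_eq_intros h3 | simp)+
  qed
  have nonpos: "\<psi>' s \<le> 0" if "0 \<le> s" for s
  proof -
    have "inner (G (y + s *\<^sub>R d)) d - inner (G y) d = inner (G (y + s *\<^sub>R d) - G y) d"
      by (simp add: inner_diff_left)
    also have "\<dots> \<le> norm (G (y + s *\<^sub>R d) - G y) * norm d" by (rule norm_cauchy_schwarz)
    also have "\<dots> \<le> (L * norm (s *\<^sub>R d)) * norm d"
      using lip[of "y + s *\<^sub>R d" y] by (simp add: mult_right_mono)
    also have "\<dots> = L * s * (norm d)\<^sup>2" using that by (simp add: power2_eq_square)
    finally show ?thesis unfolding \<psi>'_def by simp
  qed
  obtain \<xi> where "\<xi> > 0" "\<xi> < 1" "\<psi> 1 - \<psi> 0 = (1 - 0) * \<psi>' \<xi>"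
    using MVT2[of 0 1 \<psi> \<psi>'] der by auto
  then have "\<psi> 1 \<le> \<psi> 0" using nonpos[of \<xi>] by simp
  then show ?thesis unfolding \<psi>_def d_def by simp
qed

lemma iter_props:
  fixes g :: "'m::finite \<Rightarrow> 'a::real_inner \<Rightarrow> real"
  assumes it: "scp_ls_iter f gradf P1 P2 g gradg c Llo Lup \<tau> xt xn Lft Lgt"
    and feasM: "\<And>z y w. (\<forall>i. M \<le> w $ i) \<Longrightarrow> (\<forall>i. Gbar g gradg z y w i \<le> 0) \<Longrightarrow> feasible g z"
    and L_pos: "0 < Llo" and tau_gt: "\<tau> > 1"
  shows "scp_accept f P1 P2 g c xt xn \<and> (\<forall>i. Gbar g gradg xn xt Lgt i \<le> 0) \<and>
         (\<forall>i. 0 \<le> Lgt $ i \<and> Lgt $ i \<le> max 1 (\<tau> * M / Llo) * Lup)"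
proof -
  from it obtain \<xi> lfs lgs zs K where
    h0: "\<forall>i. Llo \<le> lgs 0 $ i \<and> lgs 0 $ i \<le> Lup" and
    hs: "\<forall>k\<le>K. scp_sub gradf P1 g gradg xt \<xi> (lfs k) (lgs k) (zs k)" and
    hk: "\<forall>k<K. \<not> scp_accept f P1 P2 g c xt (zs k) \<and>
               (if feasible g (zs k)
                then lfs (Suc k) = \<tau> * lfs k \<and> lgs (Suc k) = lgs k
                else lfs (Suc k) = lfs k \<and> lgs (Suc k) = \<tau> *\<^sub>R lgs k)" and
    hK: "scp_accept f P1 P2 g c xt (zs K)" and
    eqs: "xn = zs K" "Lgt = lgs K"
    unfolding scp_ls_iter_def by blast
  have G: "\<forall>i. Gbar g gradg (zs k) xt (lgs k) i \<le> 0" if "k \<le> K" for k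
    using hs that unfolding scp_sub_def is_arg_min_def by blast
  have A: "\<exists>a. lgs k = a *\<^sub>R lgs 0 \<and> 1 \<le> a \<and> a \<le> max 1 (\<tau> * M / Llo)" if "k \<le> K" for k
    using that
  proof (induction k)
    case 0 then show ?case by (intro exI[of _ 1]) simp
  next
    case (Suc k)
    then obtain a where a: "lgs k = a *\<^sub>R lgs 0" "1 \<le> a" "a \<le> max 1 (\<tau> * M / Llo)" by auto
    have kK: "k < K" using Suc by simp
    show ?case
    proof (cases "feasible g (zs k)")
      case True
      then show ?thesis using hk kK a by auto
    next
      case False
      then have e: "lgs (Suc k) = (\<tau> * a) *\<^sub>R lgs 0" using hk kK a by auto
      have "\<not> (\<forall>i. M \<le> lgs k $ i)" using feasM[of "lgs k" "zs k" xt] G[of k] kK False by auto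
      then obtain i where i: "lgs k $ i < M" by (auto simp: not_le)
      have m: "a * Llo \<le> a * lgs 0 $ i" using h0 a by (intro mult_left_mono) auto
      have "lgs k $ i = a * lgs 0 $ i" using a by simp
      then have "a * Llo < M" using i m by linarith
      then have "a < M / Llo" using L_pos by (simp add: field_simps)
      then have "\<tau> * a \<le> \<tau> * (M / Llo)" using tau_gt by (intro mult_left_mono) auto
      then have "\<tau> * a \<le> \<tau> * M / Llo" by simp
      moreover have "1 \<le> \<tau> * a" proof -
        have "1 * 1 \<le> \<tau> * a" using a(2) tau_gt by (intro mult_mono) auto
        then show ?thesis by simp
      qed
      ultimately show ?thesis using e by (intro exI[of _ "\<tau> * a"]) auto
    qed
  qed
  obtain a where a: "lgs K = a *\<^sub>R lgs 0" "1 \<le> a" "a \<le> max 1 (\<tau> * M / Llo)" using A by auto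
  have "0 \<le> Lgt $ i \<and> Lgt $ i \<le> max 1 (\<tau> * M / Llo) * Lup" for i
  proof -
    have "Lgt $ i = a * lgs 0 $ i" using a eqs by simp
    moreover have "0 \<le> lgs 0 $ i" "lgs 0 $ i \<le> Lup" using h0 L_pos by (auto intro: order.trans[of 0 Llo])
    ultimately show ?thesis using a by (auto intro: mult_mono)
  qed
  then show ?thesis using hK G[of K] eqs by auto
qed

theorem mainTheorem4:
  fixes f :: "'a::euclidean_space \<Rightarrow> real" and gradf :: "'a \<Rightarrow> 'a"
    and P1 P2 :: "'a \<Rightarrow> real"
    and g :: "'m::finite \<Rightarrow> 'a \<Rightarrow> real" and gradg :: "'m \<Rightarrow> 'a \<Rightarrow> 'a"
    and c Llo Lup \<tau> :: real
    and x :: "nat \<Rightarrow> 'a" and Lf :: "nat \<Rightarrow> real" and Lg :: "nat \<Rightarrow> real^'m"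
  assumes f_grad: "\<And>z. (f has_derivative (\<lambda>h. inner (gradf z) h)) (at z)"
    and f_C1: "continuous_on UNIV gradf"
    and f_lip: "\<exists>L. \<forall>y z. norm (gradf y - gradf z) \<le> L * norm (y - z)"
    and P1_cvx: "convex_on UNIV P1" and P1_cont: "continuous_on UNIV P1"
    and P2_cvx: "convex_on UNIV P2" and P2_cont: "continuous_on UNIV P2"
    and g_cont: "\<And>i. continuous_on UNIV (g i)"
    and g_grad: "\<And>i z. (g i has_derivative (\<lambda>h. inner (gradg i z) h)) (at z)"
    and g_C1: "\<And>i. continuous_on UNIV (gradg i)"
    and g_lip: "\<And>i. \<exists>L. \<forall>y z. norm (gradg i y - gradg i z) \<le> L * norm (y - z)"
    and feas_nonempty: "\<exists>z. feasible g z"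
    and F_lb: "level_bounded (Fobj f P1 P2 g)"
    and MFCQ: "\<And>z. feasible g z \<Longrightarrow> \<exists>d. \<forall>i. g i z = 0 \<longrightarrow> inner (gradg i z) d < 0"
    and c_pos: "c > 0" and L_pos: "0 < Llo" and L_lt: "Llo < Lup" and tau_gt: "\<tau> > 1"
    and gen: "scp_ls_seq f gradf P1 P2 g gradg c Llo Lup \<tau> x Lf Lg"
  shows "accum_points (\<lambda>t. (x (Suc t), x t, Lg t)) \<noteq> {} \<and>
         (\<exists>Fstar::real.
            (\<lambda>t. Fbar f P1 P2 g gradg (x (Suc t)) (x t) (Lg t)) \<longlonglongrightarrow> ereal Fstar \<and>
            (\<forall>(u, v, w) \<in> accum_points (\<lambda>t. (x (Suc t), x t, Lg t)).
               Fbar f P1 P2 g gradg u v w = ereal Fstar))"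
  proof -
  define h where "h = (\<lambda>z. f z + P1 z - P2 z)"
  from gen have x0: "feasible g (x 0)"
    and it: "\<And>t. scp_ls_iter f gradf P1 P2 g gradg c Llo Lup \<tau> (x t) (x (Suc t)) (Lf t) (Lg t)"
    unfolding scp_ls_seq_def by auto
  have "\<forall>i. \<exists>L. \<forall>y z. norm (gradg i y - gradg i z) \<le> L * norm (y - z)" using g_lip by blast
  then obtain Lc where Lc: "\<And>i y z. norm (gradg i y - gradg i z) \<le> Lc i * norm (y - z)" by metis
  define M where "M = (\<Sum>i\<in>UNIV. \<bar>Lc i\<bar>)"
  have LcM: "Lc i \<le> M" for i
  proof -
    have "Lc i \<le> \<bar>Lc i\<bar>" by simp
    also have "\<dots> \<le> M" unfolding M_def by (rule member_le_sum) auto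
    finally show ?thesis .
  qed
  have lipM: "norm (gradg i y - gradg i z) \<le> M * norm (y - z)" for i y z
    using Lc[of i y z] LcM[of i] by (meson mult_right_mono norm_ge_zero order_trans)
  have feasM: "feasible g z" if "\<forall>i. M \<le> w $ i" "\<forall>i. Gbar g gradg z y w i \<le> 0" for z y w
    unfolding feasible_def
  proof
    fix i
    have "g i z \<le> g i y + inner (gradg i y) (z - y) + M/2 * (norm (z-y))\<^sup>2"
      by (rule descent[OF g_grad lipM])
    also have "\<dots> \<le> Gbar g gradg z y w i" unfolding Gbar_def
      using that(1) by (simp add: mult_right_mono)
    also have "\<dots> \<le> 0" using that(2) by simp
    finally show "g i z \<le> 0" .
  qed
  have IP: "scp_accept f P1 P2 g c (x t) (x (Suc t)) \<and> (\<forall>i. Gbar g gradg (x (Suc t)) (x t) (Lg t) i \<le> 0) \<and>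
         (\<forall>i. 0 \<le> Lg t $ i \<and> Lg t $ i \<le> max 1 (\<tau> * M / Llo) * Lup)" for t
    by (rule iter_props[OF it feasM L_pos tau_gt]) auto
  have feas: "feasible g (x t)" for t
    using IP x0 unfolding scp_accept_def by (cases t) auto
  have Fx: "Fobj f P1 P2 g (x t) = ereal (h (x t))" for t
    using feas unfolding Fobj_def h_def by simp
  have dec: "h (x (Suc t)) \<le> h (x t)" for t
  proof -
    have "ereal (h (x (Suc t))) \<le> ereal (h (x t)) - ereal (c / 2 * (norm (x (Suc t) - x t))\<^sup>2)"
      using IP[of t] unfolding scp_accept_def Fx by simp
    then have "h (x (Suc t)) \<le> h (x t) - c / 2 * (norm (x (Suc t) - x t))\<^sup>2" by simp
    moreover have "0 \<le> c / 2 * (norm (x (Suc t) - x t))\<^sup>2" using c_pos by simp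
    ultimately show ?thesis by linarith
  qed
  have ds: "decseq (\<lambda>t. h (x t))" by (rule decseq_SucI) (use dec in simp)
  have xbd: "bounded (range x)"
  proof -
    have "range x \<subseteq> {z. Fobj f P1 P2 g z \<le> ereal (h (x 0))}"
      using ds Fx by (auto simp: decseq_def)
    moreover have "bounded {z. Fobj f P1 P2 g z \<le> ereal (h (x 0))}"
      using F_lb unfolding level_bounded_def by blast
    ultimately show ?thesis by (rule bounded_subset[rotated])
  qed
  have fcont: "continuous_on UNIV f"
    using f_grad by (meson continuous_at_imp_continuous_on has_derivative_continuous)
  have hcont: "continuous_on UNIV h" unfolding h_def
    by (intro continuous_intros fcont P1_cont P2_cont)
  have "compact (h ` closure (range x))"
    by (rule compact_continuous_image) (use hcont xbd in \<open>auto intro: continuous_on_subset compact_closure[THEN iffD2]\<close>)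
  then have "bounded (h ` closure (range x))" by (rule compact_imp_bounded)
  then obtain B where B: "\<And>v. v \<in> h ` closure (range x) \<Longrightarrow> norm v \<le> B" unfolding bounded_iff by auto
  have lb: "\<forall>t. - B \<le> h (x t)"
  proof
    fix t
    have "x t \<in> closure (range x)" using closure_subset[of "range x"] by blast
    then have "norm (h (x t)) \<le> B" using B by blast
    then show "- B \<le> h (x t)" by simp
  qed
  obtain Fstar where lim: "(\<lambda>t. h (x t)) \<longlonglongrightarrow> Fstar"
    using decseq_convergent[OF ds lb] by blast
  have lim1: "(\<lambda>t. h (x (Suc t))) \<longlonglongrightarrow> Fstar" using LIMSEQ_Suc[OF lim] by simp
  have Fbar_eq: "Fbar f P1 P2 g gradg (x (Suc t)) (x t) (Lg t) = ereal (h (x (Suc t)))" for t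
    using IP[of t] unfolding Fbar_def h_def by simp
  define s where "s = (\<lambda>t. (x (Suc t), x t, Lg t))"
  have Lgbd: "bounded (range Lg)"
  proof -
    have "norm (Lg t) \<le> real CARD('m) * (max 1 (\<tau> * M / Llo) * Lup)" for t
    proof -
      have "norm (Lg t) \<le> (\<Sum>i\<in>UNIV. \<bar>Lg t $ i\<bar>)" by (rule norm_le_l1_cart)
      also have "\<dots> \<le> (\<Sum>i\<in>(UNIV::'m set). max 1 (\<tau> * M / Llo) * Lup)"
        by (rule sum_mono) (use IP[of t] in auto)
      finally show ?thesis by simp
    qed
    then show ?thesis unfolding bounded_iff by blast
  qed
  have x1bd: "bounded (range (\<lambda>t. x (Suc t)))" by (rule bounded_subset[OF xbd]) auto
  have sbd: "bounded (range s)"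
  proof -
    have "range s \<subseteq> range (\<lambda>t. x (Suc t)) \<times> (range x \<times> range Lg)" unfolding s_def by auto
    moreover have "bounded (range (\<lambda>t. x (Suc t)) \<times> (range x \<times> range Lg))"
      by (intro bounded_Times x1bd xbd Lgbd)
    ultimately show ?thesis by (rule bounded_subset[rotated])
  qed
  have ne: "accum_points s \<noteq> {}"
    using bounded_imp_convergent_subsequence[OF sbd] unfolding accum_points_def by blast
  have pts: "Fbar f P1 P2 g gradg u v w = ereal Fstar" if "(u, v, w) \<in> accum_points s" for u v w
  proof -
    from that obtain r where r: "strict_mono r" "(s \<circ> r) \<longlonglongrightarrow> (u, v, w)"
      unfolding accum_points_def by blast
    have cu: "(\<lambda>n. x (Suc (r n))) \<longlonglongrightarrow> u"
      using tendsto_fst[OF r(2)] unfolding s_def by (simp add: o_def)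
    have cvw: "(\<lambda>n. (x (r n), Lg (r n))) \<longlonglongrightarrow> (v, w)"
      using tendsto_snd[OF r(2)] unfolding s_def by (simp add: o_def)
    have cv: "(\<lambda>n. x (r n)) \<longlonglongrightarrow> v" using tendsto_fst[OF cvw] by simp
    have cw: "(\<lambda>n. Lg (r n)) \<longlonglongrightarrow> w" using tendsto_snd[OF cvw] by simp
    have "(\<lambda>n. h (x (Suc (r n)))) \<longlonglongrightarrow> h u"
      using continuous_on_tendsto_compose[OF hcont cu] by simp
    moreover have "(\<lambda>n. h (x (Suc (r n)))) \<longlonglongrightarrow> Fstar"
      using LIMSEQ_subseq_LIMSEQ[OF lim1 r(1)] by (simp add: o_def)
    ultimately have hu: "h u = Fstar" by (rule LIMSEQ_unique)
    have Gl: "Gbar g gradg u v w i \<le> 0" for i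
    proof -
      have gc: "(\<lambda>n. g i (x (r n))) \<longlonglongrightarrow> g i v"
        using continuous_on_tendsto_compose[OF g_cont cv] by simp
      have ggc: "(\<lambda>n. gradg i (x (r n))) \<longlonglongrightarrow> gradg i v"
        using continuous_on_tendsto_compose[OF g_C1 cv] by simp
      have wc: "(\<lambda>n. Lg (r n) $ i) \<longlonglongrightarrow> w $ i"
        using cw by (rule tendsto_vec_nth)
      have "(\<lambda>n. Gbar g gradg (x (Suc (r n))) (x (r n)) (Lg (r n)) i) \<longlonglongrightarrow> Gbar g gradg u v w i"
        unfolding Gbar_def by (intro tendsto_intros gc ggc wc cu cv cw) auto
      moreover have "\<forall>n. Gbar g gradg (x (Suc (r n))) (x (r n)) (Lg (r n)) i \<le> 0" using IP by blast
      ultimately show ?thesis by (intro LIMSEQ_le_const2) auto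
    qed
    show ?thesis unfolding Fbar_def using Gl hu h_def by simp
  qed
  have "(\<lambda>t. Fbar f P1 P2 g gradg (x (Suc t)) (x t) (Lg t)) \<longlonglongrightarrow> ereal Fstar"
    unfolding Fbar_eq using lim1 by (rule tendsto_ereal)
  then show ?thesis using ne pts unfolding s_def by blast
qed

end
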